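(* Let $f$ be a Lévy exponent with Lévy triplet $(\mu,\sigma^2,V)$ and let $0<p\le q\le 2$. Define $\mathcal{A}_{sym}=\emptyset$ if $V$ is symmetric and $\{1\}$ otherwise; $\mathcal{A}_1=\emptyset$ if $\mu=0$ and $\{1\}$ otherwise; $\mathcal{A}_2=\emptyset$ if $\sigma^2=0$ and $\{2\}$ otherwise; $\mathcal{A}=\{p,q\}\cup\mathcal{A}_{sym}\cup\mathcal{A}_1\cup\mathcal{A}_2$; $p_{\min}=\min\mathcal{A}$, $p_{\max}=\max\mathcal{A}$. If $V\in\mathscr{M}(p_{\min},p_{\max})$, then the functional $F(\varphi)=\int_{\mathbb{R}^d}f(\varphi(\mathbf{r}))\,\mathrm{d}\mathbf{r}$ is well defined on $L^{p_{\min}}(\mathbb{R}^d)\cap L^{p_{\max}}(\mathbb{R}^d)$, and there exist $\nu_1,\nu_2\ge0$ such that for all $\varphi,\psi\in L^{p_{\min}}\cap L^{p_{\max}}$, $$|F(\varphi)-F(\psi)|\le\nu_1H_{p_{\min}}(\varphi,\psi)+\nu_2H_{p_{\max}}(\varphi,\psi).$$ Consequently $F$ is continuous on $L^{p_{\min}}\cap L^{p_{\max}}$.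
   Context: A Lévy exponent with triplet $(\mu,\sigma^2,V)$ is $f(\omega)=\mathrm{j}\mu\omega-\frac{\sigma^2\omega^2}{2}+\int_{\mathbb{R}\setminus\{0\}}(\mathrm{e}^{\mathrm{j}a\omega}-1-\mathrm{j}\omega a\mathbb{1}_{|a|<1})V(\mathrm{d}a)$, $\mu\in\mathbb{R}$, $\sigma^2\ge0$, $V$ a Radon measure on $\mathbb{R}\setminus\{0\}$ with $\int\min(1,a^2)V(\mathrm{d}a)<\infty$; $V$ is symmetric if $V(B)=V(-B)$. $\mathscr{M}(p,q)$ is the set of Radon measures $V$ on $\mathbb{R}\setminus\{0\}$ with $\int_{0<|a|<1}|a|^qV(\mathrm{d}a)<\infty$ and $\int_{|a|\ge1}|a|^pV(\mathrm{d}a)<\infty$. $H_r(\varphi,\psi)=\sqrt{(\|\varphi\|_r^r+\|\psi\|_r^r)\|\varphi-\psi\|_r^r}$ with $\|\varphi\|_r^r=\int|\varphi|^r$. $L^r$ for $0<r<1$ is metrized by $d_r(f,g)=\int|f-g|^r$; the intersection carries the sum of the two metrics/norms. Functions are real-valued. *)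

theory Defs
  imports "HOL-Analysis.Analysis"
begin

text \<open>Local finiteness on R minus 0 (Radon) follows from the integrability condition.\<close>
definition levy_measure :: "real measure \<Rightarrow> bool" where
  "levy_measure V \<longleftrightarrow> sets V = sets borel \<and> emeasure V {0} = 0 \<and>
     (\<integral>\<^sup>+ a. ennreal (min 1 (a\<^sup>2)) \<partial>V) < \<infinity>"

definition levy_exponent :: "real \<Rightarrow> real \<Rightarrow> real measure \<Rightarrow> real \<Rightarrow> complex" where
  "levy_exponent \<mu> \<sigma>2 V \<omega> =
     \<i> * complex_of_real (\<mu> * \<omega>) - complex_of_real (\<sigma>2 * \<omega>\<^sup>2 / 2)
     + (\<integral>a. indicator (- {0}) a *\<^sub>R
          (exp (\<i> * complex_of_real (a * \<omega>)) - 1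
           - \<i> * complex_of_real (\<omega> * a * indicator {a. \<bar>a\<bar> < 1} a)) \<partial>V)"

definition symmetric_measure :: "real measure \<Rightarrow> bool" where
  "symmetric_measure V \<longleftrightarrow> (\<forall>B \<in> sets borel. emeasure V B = emeasure V (uminus ` B))"

definition levy_class :: "real \<Rightarrow> real \<Rightarrow> real measure set" where
  "levy_class p q = {V. sets V = sets borel \<and>
     (\<integral>\<^sup>+ a. ennreal (indicator {a. 0 < \<bar>a\<bar> \<and> \<bar>a\<bar> < 1} a * \<bar>a\<bar> powr q) \<partial>V) < \<infinity> \<and>
     (\<integral>\<^sup>+ a. ennreal (indicator {a. 1 \<le> \<bar>a\<bar>} a * \<bar>a\<bar> powr p) \<partial>V) < \<infinity>}"

definition Lr :: "real \<Rightarrow> ('a::euclidean_space \<Rightarrow> real) set" where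
  "Lr r = {\<phi>. \<phi> \<in> borel_measurable lborel \<and>
              (\<integral>\<^sup>+ x. ennreal (\<bar>\<phi> x\<bar> powr r) \<partial>lborel) < \<infinity>}"

definition norm_rr :: "real \<Rightarrow> ('a::euclidean_space \<Rightarrow> real) \<Rightarrow> real" where
  "norm_rr r \<phi> = (\<integral>x. \<bar>\<phi> x\<bar> powr r \<partial>lborel)"

definition H :: "real \<Rightarrow> ('a::euclidean_space \<Rightarrow> real) \<Rightarrow> ('a \<Rightarrow> real) \<Rightarrow> real" where
  "H r \<phi> \<psi> = sqrt ((norm_rr r \<phi> + norm_rr r \<psi>) * norm_rr r (\<lambda>x. \<phi> x - \<psi> x))"

definition Lr_dist :: "real \<Rightarrow> ('a::euclidean_space \<Rightarrow> real) \<Rightarrow> ('a \<Rightarrow> real) \<Rightarrow> real" where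
  "Lr_dist r \<phi> \<psi> = (if r < 1 then norm_rr r (\<lambda>x. \<phi> x - \<psi> x)
                      else norm_rr r (\<lambda>x. \<phi> x - \<psi> x) powr (1 / r))"

definition exps_A :: "real \<Rightarrow> real \<Rightarrow> real \<Rightarrow> real \<Rightarrow> real measure \<Rightarrow> real set" where
  "exps_A p q \<mu> \<sigma>2 V = {p, q} \<union> (if symmetric_measure V then {} else {1})
      \<union> (if \<mu> = 0 then {} else {1}) \<union> (if \<sigma>2 = 0 then {} else {2})"

definition p_min :: "real \<Rightarrow> real \<Rightarrow> real \<Rightarrow> real \<Rightarrow> real measure \<Rightarrow> real" where
  "p_min p q \<mu> \<sigma>2 V = Min (exps_A p q \<mu> \<sigma>2 V)"

definition p_max :: "real \<Rightarrow> real \<Rightarrow> real \<Rightarrow> real \<Rightarrow> real measure \<Rightarrow> real" where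
  "p_max p q \<mu> \<sigma>2 V = Max (exps_A p q \<mu> \<sigma>2 V)"

definition levy_functional :: "(real \<Rightarrow> complex) \<Rightarrow> ('a::euclidean_space \<Rightarrow> real) \<Rightarrow> complex" where
  "levy_functional f \<phi> = (\<integral>r. f (\<phi> r) \<partial>lborel)"

end

theory Submission
  imports Defs "HOL-Probability.Characteristic_Functions"
begin


lemma min1_le_powr:
  fixes t th :: real assumes "0 \<le> t" "0 \<le> th" "th \<le> 1"
  shows "min 1 t \<le> t powr th"
proof (cases "t \<le> 1")
  case True
  show ?thesis
  proof (cases "t = 0")
    case False
    then have "t powr 1 \<le> t powr th" using True assms
      by (intro powr_mono') auto
    then show ?thesis using False assms by simp
  qed simp
next
  case False
  then have "1 \<le> t powr th" using assms by (intro ge_one_powr_ge_zero) auto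
  then show ?thesis by simp
qed

lemma sum_powr_le4:
  fixes a b r :: real assumes "0 \<le> a" "0 \<le> b" "0 < r" "r \<le> 2"
  shows "(a + b) powr r \<le> 4 * (a powr r + b powr r)"
proof -
  have "(a + b) powr r \<le> (2 * max a b) powr r"
    using assms by (intro powr_mono2) auto
  also have "\<dots> = 2 powr r * max a b powr r"
    using assms by (simp add: powr_mult)
  also have "\<dots> \<le> 4 * max a b powr r"
  proof -
    have "2 powr r \<le> 2 powr 2" using assms by (intro powr_mono) auto
    then have "2 powr r \<le> 4" by simp
    then show ?thesis by (intro mult_right_mono) auto
  qed
  also have "max a b powr r \<le> a powr r + b powr r"
    by (cases "a \<le> b") auto
  then have "4 * max a b powr r \<le> 4 * (a powr r + b powr r)" by simp
  finally show ?thesis .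
qed



lemma ie1: "cmod (iexp t - 1) \<le> \<bar>t\<bar>"
  using iexp_approx1[of t 0] by simp
lemma ie2: "cmod (iexp t - 1) \<le> 2"
  using iexp_approx2[of t 0] by simp
lemma ie3: "cmod (iexp t - 1 - \<i> * complex_of_real t) \<le> t\<^sup>2 / 2"
  using iexp_approx1[of t 1] by (simp add: power2_eq_square algebra_simps)
lemma ie_min: "cmod (iexp t - 1) \<le> 2 * min 1 \<bar>t\<bar>"
  using ie1[of t] ie2[of t] by (auto simp: min_def)
lemma ie3_min: "cmod (iexp t - 1 - \<i> * complex_of_real t) \<le> 2 * \<bar>t\<bar> * min 1 \<bar>t\<bar>"
proof -
  have a: "cmod (iexp t - 1 - \<i> * complex_of_real t) \<le> cmod (iexp t - 1) + \<bar>t\<bar>"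
    using norm_triangle_ineq4[of "iexp t - 1" "\<i> * complex_of_real t"] by (simp add: norm_mult)
  show ?thesis
  proof (cases "\<bar>t\<bar> \<le> 1")
    case True
    have "t\<^sup>2 / 2 \<le> 2 * \<bar>t\<bar> * \<bar>t\<bar>" by (simp add: power2_eq_square abs_mult_self_eq)
    then show ?thesis using ie3[of t] True by (simp add: min_def)
  next
    case False
    then show ?thesis using a ie1[of t] by (simp add: min_def)
  qed
qed

definition Bf :: "real \<Rightarrow> real \<Rightarrow> real \<Rightarrow> real" where
  "Bf r x y = ((\<bar>x\<bar> + \<bar>y\<bar>) * \<bar>x - y\<bar>) powr (r / 2)"

lemma Bf_nonneg: "0 \<le> Bf r x y" by (simp add: Bf_def)

lemma Bf_zero: "Bf r x 0 = \<bar>x\<bar> powr r"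
proof -
  have "Bf r x 0 = (\<bar>x\<bar> * \<bar>x\<bar>) powr (r/2)" by (simp add: Bf_def)
  also have "\<dots> = \<bar>x\<bar> powr (r/2) * \<bar>x\<bar> powr (r/2)" by (rule powr_mult)
  also have "\<dots> = \<bar>x\<bar> powr r" by (simp add: powr_add[symmetric])
  finally show ?thesis .
qed

lemma Bf_sym: "Bf r x y = Bf r y x"
  by (simp add: Bf_def abs_minus_commute add.commute)

lemma diff_powr_le_Bf: assumes "0 \<le> s" shows "\<bar>x - y\<bar> powr s \<le> Bf s x y"
proof -
  have "(\<bar>x - y\<bar> * \<bar>x - y\<bar>) powr (s/2) = \<bar>x - y\<bar> powr (s/2) * \<bar>x - y\<bar> powr (s/2)"
    by (rule powr_mult)
  then have "\<bar>x - y\<bar> powr s = (\<bar>x - y\<bar> * \<bar>x - y\<bar>) powr (s/2)"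
    by (simp add: powr_add[symmetric])
  also have "\<dots> \<le> ((\<bar>x\<bar> + \<bar>y\<bar>) * \<bar>x - y\<bar>) powr (s / 2)"
    using assms by (intro powr_mono2 mult_right_mono) auto
  finally show ?thesis by (simp add: Bf_def)
qed

lemma DA_le_Bf: assumes "1 \<le> s" "s \<le> 2"
  shows "\<bar>x - y\<bar> * (\<bar>x\<bar> + \<bar>y\<bar>) powr (s - 1) \<le> Bf s x y"
proof (cases "x = y")
  case True then show ?thesis by (simp add: Bf_nonneg)
next
  case False
  define A where "A = \<bar>x\<bar> + \<bar>y\<bar>"
  define D where "D = \<bar>x - y\<bar>"
  have D: "0 < D" using False by (simp add: D_def)
  have DA: "D \<le> A" by (simp add: D_def A_def)
  then have A: "0 < A" using D by simp
  have "D * A powr (s - 1) = D powr (s/2) * D powr (1 - s/2) * A powr (s - 1)"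
    using D by (simp add: powr_add[symmetric])
  also have "\<dots> \<le> D powr (s/2) * A powr (1 - s/2) * A powr (s - 1)"
    using D DA assms by (intro mult_right_mono mult_left_mono powr_mono2) auto
  also have "\<dots> = (A * D) powr (s/2)"
    using A D by (simp add: powr_mult mult_ac powr_add[symmetric])
  finally show ?thesis by (simp add: Bf_def A_def D_def)
qed

lemma powr_between:
  fixes t a b c :: real assumes "0 \<le> t" "a \<le> c" "c \<le> b"
  shows "t powr c \<le> t powr a + t powr b"
proof (cases "t \<le> 1")
  case True
  then have "t powr c \<le> t powr a"
    using assms by (cases "t = 0") (auto intro: powr_mono')
  then show ?thesis by (smt (verit) powr_ge_zero)
next
  case False
  then have "t powr c \<le> t powr b" using assms by (intro powr_mono) auto
  then show ?thesis by (smt (verit) powr_ge_zero)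
qed

lemma Bf_between: assumes "a \<le> c" "c \<le> b" shows "Bf c x y \<le> Bf a x y + Bf b x y"
  unfolding Bf_def using assms by (intro powr_between) auto

lemma drift_le: "\<bar>x - y\<bar> \<le> Bf 1 x y"
  using diff_powr_le_Bf[of 1 x y] by simp

lemma sq_le: "\<bar>x\<^sup>2 - y\<^sup>2\<bar> \<le> Bf 2 x y"
proof -
  have "\<bar>x\<^sup>2 - y\<^sup>2\<bar> = \<bar>x + y\<bar> * \<bar>x - y\<bar>" by (simp add: power2_eq_square algebra_simps abs_mult[symmetric])
  also have "\<dots> \<le> (\<bar>x\<bar> + \<bar>y\<bar>) * \<bar>x - y\<bar>" by (intro mult_right_mono abs_triangle_ineq) auto
  finally show ?thesis by (simp add: Bf_def)
qed



lemma abs_sin_min: "\<bar>sin (w::real)\<bar> \<le> min 1 \<bar>w\<bar>"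
  using abs_sin_x_le_abs_x[of w] abs_sin_le_one[of w] by simp

lemma min1_mono: "(t::real) \<le> u \<Longrightarrow> min 1 t \<le> min 1 u" by simp

lemma K1: assumes "0 \<le> r" "r \<le> 2"
  shows "\<bar>cos (a*x) - cos (a*y)\<bar> \<le> 2 * \<bar>a\<bar> powr r * Bf r x y"
proof -
  define A where "A = \<bar>x\<bar> + \<bar>y\<bar>"
  define D where "D = \<bar>x - y\<bar>"
  have "\<bar>cos (a*x) - cos (a*y)\<bar> = 2 * \<bar>sin ((a*x + a*y)/2)\<bar> * \<bar>sin ((a*y - a*x)/2)\<bar>"
    by (simp add: cos_diff_cos abs_mult)
  also have "\<dots> \<le> 2 * min 1 (\<bar>a\<bar> * A) * min 1 (\<bar>a\<bar> * D)"
  proof -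
    have 1: "\<bar>sin ((a*x + a*y)/2)\<bar> \<le> min 1 (\<bar>a\<bar> * A)"
    proof -
      have "\<bar>(a*x + a*y)/2\<bar> \<le> \<bar>a\<bar> * A"
      proof -
        have "\<bar>(a*x + a*y)/2\<bar> \<le> \<bar>a*x + a*y\<bar>" by simp
        also have "\<dots> = \<bar>a\<bar> * \<bar>x + y\<bar>" by (simp add: abs_mult[symmetric] distrib_left)
        also have "\<dots> \<le> \<bar>a\<bar> * A" unfolding A_def by (intro mult_left_mono abs_triangle_ineq) auto
        finally show ?thesis .
      qed
      then show ?thesis using abs_sin_min[of "(a*x + a*y)/2"] by linarith
    qed
    have 2: "\<bar>sin ((a*y - a*x)/2)\<bar> \<le> min 1 (\<bar>a\<bar> * D)"
    proof -
      have "\<bar>(a*y - a*x)/2\<bar> \<le> \<bar>a\<bar> * D"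
        unfolding D_def by (simp add: right_diff_distrib[symmetric] abs_mult abs_minus_commute)
      then show ?thesis using abs_sin_min[of "(a*y - a*x)/2"] by linarith
    qed
    show ?thesis using 1 2 by (intro mult_mono mult_left_mono) auto
  qed
  also have "\<dots> \<le> 2 * (\<bar>a\<bar> * A) powr (r/2) * (\<bar>a\<bar> * D) powr (r/2)"
    using assms by (intro mult_mono mult_left_mono min1_le_powr) (auto simp: A_def D_def)
  also have "\<dots> = 2 * ((\<bar>a\<bar> * \<bar>a\<bar>) * (A * D)) powr (r/2)"
    by (simp add: powr_mult[symmetric] mult_ac)
  also have "\<dots> = 2 * ((\<bar>a\<bar> * \<bar>a\<bar>) powr (r/2) * (A * D) powr (r/2))"
    by (subst powr_mult) auto
  also have "(\<bar>a\<bar> * \<bar>a\<bar>) powr (r/2) = \<bar>a\<bar> powr r"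
    by (subst powr_mult) (simp_all add: powr_add[symmetric])
  also have "2 * (\<bar>a\<bar> powr r * (A * D) powr (r/2)) = 2 * \<bar>a\<bar> powr r * Bf r x y"
    by (simp add: Bf_def A_def D_def)
  finally show ?thesis .
qed

lemma iexp_norm: "cmod (iexp t) = 1" by simp

lemma K2: assumes "0 \<le> s" "s \<le> 1"
  shows "cmod (iexp (a*x) - iexp (a*y)) \<le> 2 * \<bar>a\<bar> powr s * Bf s x y"
proof -
  have e: "iexp (a*x) - iexp (a*y) = iexp (a*y) * (iexp (a*(x-y)) - 1)"
  proof -
    have "\<i> * complex_of_real (a*x) = \<i> * complex_of_real (a*y) + \<i> * complex_of_real (a*(x-y))"
      by (simp add: right_diff_distrib ring_distribs)
    then have "iexp (a*x) = iexp (a*y) * iexp (a*(x-y))" by (simp add: exp_add[symmetric])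
    then show ?thesis by (simp add: right_diff_distrib)
  qed
  have "cmod (iexp (a*x) - iexp (a*y)) = cmod (iexp (a*(x-y)) - 1)"
    unfolding e by (simp add: norm_mult)
  also have "\<dots> \<le> 2 * min 1 \<bar>a*(x-y)\<bar>" by (rule ie_min)
  also have "\<dots> \<le> 2 * \<bar>a*(x-y)\<bar> powr s"
    using assms by (intro mult_left_mono min1_le_powr) auto
  also have "\<dots> = 2 * \<bar>a\<bar> powr s * \<bar>x-y\<bar> powr s" by (simp add: abs_mult powr_mult)
  also have "\<dots> \<le> 2 * \<bar>a\<bar> powr s * Bf s x y"
    using assms by (intro mult_left_mono diff_powr_le_Bf) auto
  finally show ?thesis .
qed

lemma K3: assumes "1 \<le> s" "s \<le> 2"
  shows "cmod (iexp (a*x) - iexp (a*y) - \<i> * complex_of_real (a*(x-y))) \<le> 4 * \<bar>a\<bar> powr s * Bf s x y"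
proof -
  define d where "d = a*(x-y)"
  define v where "v = a*y"
  define W where "W = \<bar>a\<bar> * (\<bar>x\<bar> + \<bar>y\<bar>)"
  have e: "iexp (a*x) - iexp (a*y) - \<i> * complex_of_real (a*(x-y))
      = iexp v * (iexp d - 1 - \<i> * complex_of_real d) + \<i> * complex_of_real d * (iexp v - 1)"
  proof -
    have "\<i> * complex_of_real (a*x) = \<i> * complex_of_real v + \<i> * complex_of_real d"
      by (simp add: d_def v_def right_diff_distrib ring_distribs)
    then have 1: "iexp (a*x) = iexp v * iexp d" by (simp add: exp_add[symmetric])
    have 2: "a * (x - y) = d" "a * y = v" by (simp_all add: d_def v_def)
    show ?thesis unfolding 1 2 by (simp add: ring_distribs)
  qed
  have dW: "\<bar>d\<bar> \<le> W" unfolding d_def W_def abs_mult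
    by (intro mult_left_mono) auto
  have vW: "\<bar>v\<bar> \<le> W" unfolding v_def W_def abs_mult
    by (intro mult_left_mono) auto
  have W0: "0 \<le> W" by (simp add: W_def)
  have md: "min 1 \<bar>d\<bar> \<le> W powr (s - 1)"
    using min1_mono[OF dW] min1_le_powr[OF W0, of "s-1"] assms by linarith
  have mv: "min 1 \<bar>v\<bar> \<le> W powr (s - 1)"
    using min1_mono[OF vW] min1_le_powr[OF W0, of "s-1"] assms by linarith
  have "cmod (iexp (a*x) - iexp (a*y) - \<i> * complex_of_real (a*(x-y)))
     \<le> cmod (iexp d - 1 - \<i> * complex_of_real d) + \<bar>d\<bar> * cmod (iexp v - 1)"
    unfolding e using norm_triangle_ineq[of "iexp v * (iexp d - 1 - \<i> * complex_of_real d)"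
        "\<i> * complex_of_real d * (iexp v - 1)"]
    by (simp add: norm_mult)
  also have "\<dots> \<le> 2 * \<bar>d\<bar> * min 1 \<bar>d\<bar> + \<bar>d\<bar> * (2 * min 1 \<bar>v\<bar>)"
    by (intro add_mono ie3_min mult_left_mono ie_min) auto
  also have "\<dots> \<le> 2 * \<bar>d\<bar> * W powr (s - 1) + \<bar>d\<bar> * (2 * W powr (s - 1))"
    using md mv by (intro add_mono mult_left_mono) auto
  also have "\<dots> = 4 * (\<bar>a\<bar> * \<bar>a\<bar> powr (s - 1)) * (\<bar>x - y\<bar> * (\<bar>x\<bar> + \<bar>y\<bar>) powr (s - 1))"
    by (simp add: d_def W_def abs_mult powr_mult)
  also have "\<bar>a\<bar> * \<bar>a\<bar> powr (s - 1) = \<bar>a\<bar> powr s"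
  proof (cases "a = 0")
    case False
    then show ?thesis using powr_add[of "\<bar>a\<bar>" 1 "s-1"] by simp
  qed simp
  also have "4 * \<bar>a\<bar> powr s * (\<bar>x - y\<bar> * (\<bar>x\<bar> + \<bar>y\<bar>) powr (s - 1)) \<le> 4 * \<bar>a\<bar> powr s * Bf s x y"
    using assms by (intro mult_left_mono DA_le_Bf) auto
  finally show ?thesis .
qed



lemma CS_real:
  fixes u w :: "'b \<Rightarrow> real"
  assumes iu: "integrable M u" and iw: "integrable M w"
    and u0: "\<And>x. 0 \<le> u x" and w0: "\<And>x. 0 \<le> w x"
  shows "integrable M (\<lambda>x. sqrt (u x * w x))"
    and "(\<integral>x. sqrt (u x * w x) \<partial>M) \<le> sqrt ((\<integral>x. u x \<partial>M) * (\<integral>x. w x \<partial>M))"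
proof -
  have mu[measurable]: "u \<in> borel_measurable M" using iu by auto
  have mw[measurable]: "w \<in> borel_measurable M" using iw by auto
  show int: "integrable M (\<lambda>x. sqrt (u x * w x))"
  proof (rule Bochner_Integration.integrable_bound[OF Bochner_Integration.integrable_add[OF iu iw]])
    show "(\<lambda>x. sqrt (u x * w x)) \<in> borel_measurable M" by measurable
    show "AE x in M. norm (sqrt (u x * w x)) \<le> norm (u x + w x)"
    proof (intro AE_I2)
      fix x
      have "u x * w x \<le> (u x + w x)\<^sup>2" using u0[of x] w0[of x]
        by (simp add: power2_eq_square algebra_simps)
      then have "sqrt (u x * w x) \<le> u x + w x"
        using u0[of x] w0[of x] by (simp add: real_le_lsqrt real_sqrt_le_iff)
      then show "norm (sqrt (u x * w x)) \<le> norm (u x + w x)"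
        using u0[of x] w0[of x] by simp
    qed
  qed
  define I where "I = (\<integral>x. sqrt (u x * w x) \<partial>M)"
  have I0: "0 \<le> I" unfolding I_def by (intro integral_nonneg_AE) (simp add: u0 w0)
  have "ennreal I = (\<integral>\<^sup>+x. ennreal (sqrt (u x * w x)) \<partial>M)"
    unfolding I_def by (rule nn_integral_eq_integral[symmetric, OF int]) (simp add: u0 w0)
  also have "\<dots> = (\<integral>\<^sup>+x. ennreal (sqrt (u x)) * ennreal (sqrt (w x)) \<partial>M)"
    using u0 w0 by (simp add: real_sqrt_mult ennreal_mult)
  finally have eI: "ennreal I = (\<integral>\<^sup>+x. ennreal (sqrt (u x)) * ennreal (sqrt (w x)) \<partial>M)" .
  have su: "(\<integral>\<^sup>+x. ennreal (sqrt (u x)) ^ 2 \<partial>M) = ennreal (\<integral>x. u x \<partial>M)"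
  proof -
    have "(\<integral>\<^sup>+x. ennreal (sqrt (u x)) ^ 2 \<partial>M) = (\<integral>\<^sup>+x. ennreal (u x) \<partial>M)"
      using u0 by (simp add: ennreal_power)
    also have "\<dots> = ennreal (\<integral>x. u x \<partial>M)"
      by (rule nn_integral_eq_integral[OF iu]) (simp add: u0)
    finally show ?thesis .
  qed
  have sw: "(\<integral>\<^sup>+x. ennreal (sqrt (w x)) ^ 2 \<partial>M) = ennreal (\<integral>x. w x \<partial>M)"
  proof -
    have "(\<integral>\<^sup>+x. ennreal (sqrt (w x)) ^ 2 \<partial>M) = (\<integral>\<^sup>+x. ennreal (w x) \<partial>M)"
      using w0 by (simp add: ennreal_power)
    also have "\<dots> = ennreal (\<integral>x. w x \<partial>M)"
      by (rule nn_integral_eq_integral[OF iw]) (simp add: w0)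
    finally show ?thesis .
  qed
  have "(ennreal I)\<^sup>2 \<le> ennreal (\<integral>x. u x \<partial>M) * ennreal (\<integral>x. w x \<partial>M)"
    unfolding eI su[symmetric] sw[symmetric]
    by (rule Cauchy_Schwarz_nn_integral) auto
  moreover have "0 \<le> (\<integral>x. u x \<partial>M)" "0 \<le> (\<integral>x. w x \<partial>M)"
    using u0 w0 by (auto intro: integral_nonneg_AE)
  ultimately have "I\<^sup>2 \<le> (\<integral>x. u x \<partial>M) * (\<integral>x. w x \<partial>M)"
    using I0 by (simp add: ennreal_power ennreal_mult[symmetric] ennreal_le_iff)
  then show "(\<integral>x. sqrt (u x * w x) \<partial>M) \<le> sqrt ((\<integral>x. u x \<partial>M) * (\<integral>x. w x \<partial>M))"
    unfolding I_def[symmetric] using I0 by (simp add: real_le_rsqrt)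
qed



lemma Lr_D:
  assumes "\<phi> \<in> Lr r"
  shows "\<phi> \<in> borel_measurable lborel" and "integrable lborel (\<lambda>x. \<bar>\<phi> x\<bar> powr r)"
proof -
  show m: "\<phi> \<in> borel_measurable lborel" using assms by (simp add: Lr_def)
  show "integrable lborel (\<lambda>x. \<bar>\<phi> x\<bar> powr r)"
    using assms m by (intro integrableI_bounded) (auto simp: Lr_def)
qed

lemma norm_rr_nonneg: "0 \<le> norm_rr r \<phi>"
  unfolding norm_rr_def by (intro integral_nonneg_AE) auto

lemma sum_powr_int:
  fixes \<phi> \<psi> :: "'a::euclidean_space \<Rightarrow> real"
  assumes "\<phi> \<in> Lr r" "\<psi> \<in> Lr r" "0 < r" "r \<le> 2"
  shows "integrable lborel (\<lambda>x. (\<bar>\<phi> x\<bar> + \<bar>\<psi> x\<bar>) powr r)"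
    and "(\<integral>x. (\<bar>\<phi> x\<bar> + \<bar>\<psi> x\<bar>) powr r \<partial>lborel) \<le> 4 * (norm_rr r \<phi> + norm_rr r \<psi>)"
proof -
  note m[measurable] = Lr_D(1)[OF assms(1)] Lr_D(1)[OF assms(2)]
  have i: "integrable lborel (\<lambda>x. 4 * (\<bar>\<phi> x\<bar> powr r + \<bar>\<psi> x\<bar> powr r))"
    using Lr_D(2)[OF assms(1)] Lr_D(2)[OF assms(2)] by auto
  have pw: "\<And>x. (\<bar>\<phi> x\<bar> + \<bar>\<psi> x\<bar>) powr r \<le> 4 * (\<bar>\<phi> x\<bar> powr r + \<bar>\<psi> x\<bar> powr r)"
    using assms by (intro sum_powr_le4) auto
  show int: "integrable lborel (\<lambda>x. (\<bar>\<phi> x\<bar> + \<bar>\<psi> x\<bar>) powr r)"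
    by (rule Bochner_Integration.integrable_bound[OF i]) (use pw in \<open>auto intro!: AE_I2\<close>)
  have "(\<integral>x. (\<bar>\<phi> x\<bar> + \<bar>\<psi> x\<bar>) powr r \<partial>lborel) \<le> (\<integral>x. 4 * (\<bar>\<phi> x\<bar> powr r + \<bar>\<psi> x\<bar> powr r) \<partial>lborel)"
    by (rule integral_mono[OF int i pw])
  also have "\<dots> = 4 * (norm_rr r \<phi> + norm_rr r \<psi>)"
    using Lr_D(2)[OF assms(1)] Lr_D(2)[OF assms(2)] by (simp add: norm_rr_def)
  finally show "(\<integral>x. (\<bar>\<phi> x\<bar> + \<bar>\<psi> x\<bar>) powr r \<partial>lborel) \<le> 4 * (norm_rr r \<phi> + norm_rr r \<psi>)" .
qed

lemma diff_powr_int: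
  fixes \<phi> \<psi> :: "'a::euclidean_space \<Rightarrow> real"
  assumes "\<phi> \<in> Lr r" "\<psi> \<in> Lr r" "0 < r" "r \<le> 2"
  shows "integrable lborel (\<lambda>x. \<bar>\<phi> x - \<psi> x\<bar> powr r)"
proof -
  note m[measurable] = Lr_D(1)[OF assms(1)] Lr_D(1)[OF assms(2)]
  show ?thesis
    by (rule Bochner_Integration.integrable_bound[OF sum_powr_int(1)[OF assms]])
      (use assms in \<open>auto intro!: AE_I2 powr_mono2\<close>)
qed

lemma Bf_sqrt: "Bf r x y = sqrt ((\<bar>x\<bar> + \<bar>y\<bar>) powr r * \<bar>x - y\<bar> powr r)"
proof -
  have "Bf r x y = (((\<bar>x\<bar> + \<bar>y\<bar>) * \<bar>x - y\<bar>) powr r) powr (1/2)"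
    by (simp add: Bf_def powr_powr)
  also have "\<dots> = sqrt (((\<bar>x\<bar> + \<bar>y\<bar>) * \<bar>x - y\<bar>) powr r)" by (simp add: powr_half_sqrt)
  also have "\<dots> = sqrt ((\<bar>x\<bar> + \<bar>y\<bar>) powr r * \<bar>x - y\<bar> powr r)" by (subst powr_mult) auto
  finally show ?thesis .
qed

lemma Bf_int:
  fixes \<phi> \<psi> :: "'a::euclidean_space \<Rightarrow> real"
  assumes "\<phi> \<in> Lr r" "\<psi> \<in> Lr r" "0 < r" "r \<le> 2"
  shows "integrable lborel (\<lambda>x. Bf r (\<phi> x) (\<psi> x))"
    and "(\<integral>x. Bf r (\<phi> x) (\<psi> x) \<partial>lborel) \<le> 2 * H r \<phi> \<psi>"
proof -
  note cs = CS_real[OF sum_powr_int(1)[OF assms] diff_powr_int[OF assms], OF powr_ge_zero powr_ge_zero]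
  show "integrable lborel (\<lambda>x. Bf r (\<phi> x) (\<psi> x))"
    unfolding Bf_sqrt by (rule cs(1))
  have "(\<integral>x. Bf r (\<phi> x) (\<psi> x) \<partial>lborel)
      \<le> sqrt ((\<integral>x. (\<bar>\<phi> x\<bar> + \<bar>\<psi> x\<bar>) powr r \<partial>lborel) * norm_rr r (\<lambda>x. \<phi> x - \<psi> x))"
    unfolding Bf_sqrt norm_rr_def by (rule cs(2))
  also have "\<dots> \<le> sqrt (4 * (norm_rr r \<phi> + norm_rr r \<psi>) * norm_rr r (\<lambda>x. \<phi> x - \<psi> x))"
    by (intro real_sqrt_le_mono mult_right_mono sum_powr_int(2)[OF assms] norm_rr_nonneg)
  also have "\<dots> = 2 * H r \<phi> \<psi>"
  proof -
    have "sqrt (4 * (norm_rr r \<phi> + norm_rr r \<psi>) * norm_rr r (\<lambda>x. \<phi> x - \<psi> x))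
        = sqrt 4 * sqrt ((norm_rr r \<phi> + norm_rr r \<psi>) * norm_rr r (\<lambda>x. \<phi> x - \<psi> x))"
      by (simp only: mult.assoc real_sqrt_mult)
    then show ?thesis by (simp add: H_def)
  qed
  finally show "(\<integral>x. Bf r (\<phi> x) (\<psi> x) \<partial>lborel) \<le> 2 * H r \<phi> \<psi>" .
qed

lemma psi_bound:
  fixes \<phi> \<psi> :: "'a::euclidean_space \<Rightarrow> real"
  assumes "\<phi> \<in> Lr r" "\<psi> \<in> Lr r" "0 < r" "r \<le> 2"
  shows "norm_rr r \<psi> \<le> 4 * (norm_rr r \<phi> + norm_rr r (\<lambda>x. \<phi> x - \<psi> x))"
proof -
  note m[measurable] = Lr_D(1)[OF assms(1)] Lr_D(1)[OF assms(2)]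
  have i: "integrable lborel (\<lambda>x. 4 * (\<bar>\<phi> x\<bar> powr r + \<bar>\<phi> x - \<psi> x\<bar> powr r))"
    using Lr_D(2)[OF assms(1)] diff_powr_int[OF assms] by auto
  have "norm_rr r \<psi> \<le> (\<integral>x. 4 * (\<bar>\<phi> x\<bar> powr r + \<bar>\<phi> x - \<psi> x\<bar> powr r) \<partial>lborel)"
    unfolding norm_rr_def
  proof (rule integral_mono[OF Lr_D(2)[OF assms(2)] i])
    fix x
    have "\<bar>\<psi> x\<bar> powr r \<le> (\<bar>\<phi> x\<bar> + \<bar>\<phi> x - \<psi> x\<bar>) powr r"
      using assms by (intro powr_mono2) auto
    also have "\<dots> \<le> 4 * (\<bar>\<phi> x\<bar> powr r + \<bar>\<phi> x - \<psi> x\<bar> powr r)"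
      using assms by (intro sum_powr_le4) auto
    finally show "\<bar>\<psi> x\<bar> powr r \<le> 4 * (\<bar>\<phi> x\<bar> powr r + \<bar>\<phi> x - \<psi> x\<bar> powr r)" .
  qed
  also have "\<dots> = 4 * (norm_rr r \<phi> + norm_rr r (\<lambda>x. \<phi> x - \<psi> x))"
    using Lr_D(2)[OF assms(1)] diff_powr_int[OF assms] by (simp add: norm_rr_def)
  finally show ?thesis .
qed

lemma dist_small:
  fixes \<phi> \<psi> :: "'a::euclidean_space \<Rightarrow> real"
  assumes "0 < r" "\<delta> \<le> 1" "Lr_dist r \<phi> \<psi> < \<delta>"
  shows "norm_rr r (\<lambda>x. \<phi> x - \<psi> x) < \<delta>"
proof (cases "r < 1")
  case True then show ?thesis using assms by (simp add: Lr_dist_def)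
next
  case False
  define N where "N = norm_rr r (\<lambda>x. \<phi> x - \<psi> x)"
  have N0: "0 \<le> N" by (simp add: N_def norm_rr_nonneg)
  have lt: "N powr (1/r) < \<delta>" using assms False by (simp add: Lr_dist_def N_def)
  have d0: "0 < \<delta>" using lt by (smt (verit) powr_ge_zero)
  have "N = (N powr (1/r)) powr r" using N0 assms by (simp add: powr_powr)
  also have "\<dots> < \<delta> powr r" using lt assms by (intro powr_less_mono2) auto
  also have "\<dots> \<le> \<delta> powr 1" using d0 assms False by (intro powr_mono') auto
  finally show ?thesis using d0 by (simp add: N_def)
qed



lemma f_cont:
  fixes f :: "real \<Rightarrow> complex"
  assumes "0 < r1" "0 < r2" "\<And>x y. norm (f x - f y) \<le> K * (Bf r1 x y + Bf r2 x y)"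
  shows "continuous_on UNIV f"
proof -
  have "isCont f x" for x
  proof -
    have c: "isCont (\<lambda>y. Bf r y x) x" if "0 < r" for r
    proof -
      have "continuous_on UNIV (\<lambda>y. Bf r y x)"
        unfolding Bf_def using that by (intro continuous_on_powr' continuous_intros) auto
      then show ?thesis by (simp add: continuous_on_eq_continuous_at)
    qed
    have "((\<lambda>y. K * (Bf r1 y x + Bf r2 y x)) \<longlongrightarrow> K * (Bf r1 x x + Bf r2 x x)) (at x)"
      using c[OF assms(1)] c[OF assms(2)] unfolding isCont_def by (intro tendsto_intros)
    then have g: "((\<lambda>y. K * (Bf r1 y x + Bf r2 y x)) \<longlongrightarrow> 0) (at x)"
      by (simp add: Bf_def)
    have "((\<lambda>y. f y - f x) \<longlongrightarrow> 0) (at x)"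
      by (rule Lim_null_comparison[OF _ g]) (use assms(3) in \<open>auto intro: always_eventually\<close>)
    then show ?thesis by (simp add: isCont_def LIM_zero_iff)
  qed
  then show ?thesis by (simp add: continuous_on_eq_continuous_at)
qed

lemma functional_part:
  fixes f :: "real \<Rightarrow> complex" and K r1 r2 :: real
  assumes K: "0 \<le> K" and r: "0 < r1" "r1 \<le> 2" "0 < r2" "r2 \<le> 2"
    and f0: "f 0 = 0"
    and fb: "\<And>x y. norm (f x - f y) \<le> K * (Bf r1 x y + Bf r2 x y)"
  shows "(\<forall>\<phi>::'a::euclidean_space \<Rightarrow> real \<in> Lr r1 \<inter> Lr r2. integrable lborel (\<lambda>r. f (\<phi> r)))
     \<and> (\<exists>\<nu>1 \<nu>2. \<nu>1 \<ge> 0 \<and> \<nu>2 \<ge> 0 \<and>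
          (\<forall>\<phi>::'a::euclidean_space \<Rightarrow> real \<in> Lr r1 \<inter> Lr r2. \<forall>\<psi>::'a \<Rightarrow> real \<in> Lr r1 \<inter> Lr r2.
             norm (levy_functional f \<phi> - levy_functional f \<psi>)
               \<le> \<nu>1 * H r1 \<phi> \<psi> + \<nu>2 * H r2 \<phi> \<psi>))
     \<and> (\<forall>\<phi>::'a::euclidean_space \<Rightarrow> real \<in> Lr r1 \<inter> Lr r2. \<forall>\<epsilon>>0. \<exists>\<delta>>0. \<forall>\<psi>::'a \<Rightarrow> real \<in> Lr r1 \<inter> Lr r2.
          Lr_dist r1 \<phi> \<psi> + Lr_dist r2 \<phi> \<psi> < \<delta> \<longrightarrow>
          norm (levy_functional f \<psi> - levy_functional f \<phi>) < \<epsilon>)"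
proof -
  have fm[measurable]: "f \<in> borel_measurable borel"
    by (rule borel_measurable_continuous_onI[OF f_cont[OF r(1) r(3) fb]])
  have int: "integrable lborel (\<lambda>x. f (\<phi> x))" if "\<phi> \<in> Lr r1 \<inter> Lr r2" for \<phi> :: "'a \<Rightarrow> real"
  proof -
    note [measurable] = Lr_D(1)[of \<phi> r1]
    have m: "\<phi> \<in> borel_measurable lborel" using that Lr_D(1) by blast
    have i: "integrable lborel (\<lambda>x. K * (\<bar>\<phi> x\<bar> powr r1 + \<bar>\<phi> x\<bar> powr r2))"
      using Lr_D(2)[of \<phi> r1] Lr_D(2)[of \<phi> r2] that by auto
    show ?thesis
    proof (rule Bochner_Integration.integrable_bound[OF i])
      show "(\<lambda>x. f (\<phi> x)) \<in> borel_measurable lborel" using m by measurable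
      show "AE x in lborel. norm (f (\<phi> x)) \<le> norm (K * (\<bar>\<phi> x\<bar> powr r1 + \<bar>\<phi> x\<bar> powr r2))"
      proof (intro AE_I2)
        fix x
        have "norm (f (\<phi> x)) = norm (f (\<phi> x) - f 0)" by (simp add: f0)
        also have "\<dots> \<le> K * (\<bar>\<phi> x\<bar> powr r1 + \<bar>\<phi> x\<bar> powr r2)" using fb[of "\<phi> x" 0] by (simp add: Bf_zero)
        finally show "norm (f (\<phi> x)) \<le> norm (K * (\<bar>\<phi> x\<bar> powr r1 + \<bar>\<phi> x\<bar> powr r2))" using K by simp
      qed
    qed
  qed
  have main: "norm (levy_functional f \<phi> - levy_functional f \<psi>) \<le> (2*K) * H r1 \<phi> \<psi> + (2*K) * H r2 \<phi> \<psi>"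
    if \<phi>: "\<phi> \<in> Lr r1 \<inter> Lr r2" and \<psi>: "\<psi> \<in> Lr r1 \<inter> Lr r2" for \<phi> \<psi> :: "'a \<Rightarrow> real"
  proof -
    have b1: "integrable lborel (\<lambda>x. Bf r1 (\<phi> x) (\<psi> x))" "(\<integral>x. Bf r1 (\<phi> x) (\<psi> x) \<partial>lborel) \<le> 2 * H r1 \<phi> \<psi>"
      using Bf_int[of \<phi> r1 \<psi>] \<phi> \<psi> r by auto
    have b2: "integrable lborel (\<lambda>x. Bf r2 (\<phi> x) (\<psi> x))" "(\<integral>x. Bf r2 (\<phi> x) (\<psi> x) \<partial>lborel) \<le> 2 * H r2 \<phi> \<psi>"
      using Bf_int[of \<phi> r2 \<psi>] \<phi> \<psi> r by auto
    have id: "integrable lborel (\<lambda>x. f (\<phi> x) - f (\<psi> x))"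
      using int[OF \<phi>] int[OF \<psi>] by auto
    have "norm (levy_functional f \<phi> - levy_functional f \<psi>) = norm (\<integral>x. f (\<phi> x) - f (\<psi> x) \<partial>lborel)"
      unfolding levy_functional_def using int[OF \<phi>] int[OF \<psi>] by (simp add: Bochner_Integration.integral_diff)
    also have "\<dots> \<le> (\<integral>x. norm (f (\<phi> x) - f (\<psi> x)) \<partial>lborel)" by (rule integral_norm_bound)
    also have "\<dots> \<le> (\<integral>x. K * (Bf r1 (\<phi> x) (\<psi> x) + Bf r2 (\<phi> x) (\<psi> x)) \<partial>lborel)"
      by (rule integral_mono) (use id b1 b2 fb in auto)
    also have "\<dots> = K * ((\<integral>x. Bf r1 (\<phi> x) (\<psi> x) \<partial>lborel) + (\<integral>x. Bf r2 (\<phi> x) (\<psi> x) \<partial>lborel))"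
      using b1 b2 by simp
    also have "\<dots> \<le> K * (2 * H r1 \<phi> \<psi> + 2 * H r2 \<phi> \<psi>)"
      using b1 b2 K by (intro mult_left_mono add_mono) auto
    finally show ?thesis by (simp add: algebra_simps)
  qed
  have cont: "\<exists>\<delta>>0. \<forall>\<psi>::'a \<Rightarrow> real \<in> Lr r1 \<inter> Lr r2.
          Lr_dist r1 \<phi> \<psi> + Lr_dist r2 \<phi> \<psi> < \<delta> \<longrightarrow>
          norm (levy_functional f \<psi> - levy_functional f \<phi>) < \<epsilon>"
    if \<phi>: "\<phi> \<in> Lr r1 \<inter> Lr r2" and e: "\<epsilon> > 0" for \<phi> :: "'a \<Rightarrow> real" and \<epsilon>
  proof -
    define C where "C = 5 * (norm_rr r1 \<phi> + norm_rr r2 \<phi>) + 4"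
    define \<nu> where "\<nu> = 4 * K + 1"
    have C: "4 \<le> C" "0 < C" using norm_rr_nonneg[of r1 \<phi>] norm_rr_nonneg[of r2 \<phi>] by (auto simp: C_def)
    have nu: "0 < \<nu>" using K by (simp add: \<nu>_def)
    define \<delta> where "\<delta> = min 1 ((\<epsilon> / (2*\<nu>))\<^sup>2 / C)"
    have d0: "0 < \<delta>" using e nu C by (simp add: \<delta>_def)
    have d1: "\<delta> \<le> 1" by (simp add: \<delta>_def)
    have dC: "C * \<delta> \<le> (\<epsilon> / (2*\<nu>))\<^sup>2"
    proof -
      have "C * \<delta> \<le> C * ((\<epsilon> / (2*\<nu>))\<^sup>2 / C)"
        using C by (intro mult_left_mono) (auto simp: \<delta>_def)
      then show ?thesis using C by simp
    qed
    show ?thesis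
    proof (intro exI[of _ \<delta>] conjI d0 ballI impI)
      fix \<psi> :: "'a \<Rightarrow> real" assume \<psi>: "\<psi> \<in> Lr r1 \<inter> Lr r2"
        and lt: "Lr_dist r1 \<phi> \<psi> + Lr_dist r2 \<phi> \<psi> < \<delta>"
      have ld0: "0 \<le> Lr_dist r \<phi> \<psi>" for r
        by (simp add: Lr_dist_def norm_rr_nonneg)
      have Hb: "H r \<phi> \<psi> \<le> \<epsilon> / (2*\<nu>)" if rr: "r = r1 \<or> r = r2" for r
      proof -
        have r': "0 < r" "r \<le> 2" "\<phi> \<in> Lr r" "\<psi> \<in> Lr r" using rr r \<phi> \<psi> by auto
        have "Lr_dist r \<phi> \<psi> < \<delta>" using lt ld0[of r1] ld0[of r2] rr by auto
        then have nd: "norm_rr r (\<lambda>x. \<phi> x - \<psi> x) < \<delta>" using dist_small r' d1 by blast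
        have np: "norm_rr r \<psi> \<le> 4 * (norm_rr r \<phi> + norm_rr r (\<lambda>x. \<phi> x - \<psi> x))"
          using psi_bound r' by blast
        have "norm_rr r \<phi> + norm_rr r \<psi> \<le> C"
          using np nd d1 rr norm_rr_nonneg[of r1 \<phi>] norm_rr_nonneg[of r2 \<phi>] by (auto simp: C_def)
        then have "(norm_rr r \<phi> + norm_rr r \<psi>) * norm_rr r (\<lambda>x. \<phi> x - \<psi> x) \<le> C * \<delta>"
          using nd C by (intro mult_mono) (auto simp: norm_rr_nonneg)
        also have "\<dots> \<le> (\<epsilon> / (2*\<nu>))\<^sup>2" by (rule dC)
        finally show ?thesis unfolding H_def using e nu
          by (metis less_eq_real_def real_le_lsqrt real_sqrt_le_mono real_sqrt_pow2 zero_le_power2 real_sqrt_ge_zero divide_pos_pos mult_pos_pos zero_less_numeral)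
      qed
      have "norm (levy_functional f \<psi> - levy_functional f \<phi>) = norm (levy_functional f \<phi> - levy_functional f \<psi>)"
        by (rule norm_minus_commute)
      also have "\<dots> \<le> (2*K) * H r1 \<phi> \<psi> + (2*K) * H r2 \<phi> \<psi>" by (rule main[OF \<phi> \<psi>])
      also have "\<dots> \<le> (2*K) * (\<epsilon> / (2*\<nu>)) + (2*K) * (\<epsilon> / (2*\<nu>))"
        using Hb K by (intro add_mono mult_left_mono) auto
      also have "\<dots> = (2*K*\<epsilon>) / \<nu>" using nu by (simp add: field_simps)
      also have "\<dots> < \<epsilon>"
      proof -
        have "0 \<le> K * \<epsilon>" using K e by simp
        then have "2*K*\<epsilon> < \<epsilon> * \<nu>" using e by (simp add: \<nu>_def algebra_simps)
        then show ?thesis using nu by (simp add: divide_less_eq)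
      qed
      finally show "norm (levy_functional f \<psi> - levy_functional f \<phi>) < \<epsilon>" .
    qed
  qed
  show ?thesis
  proof (intro conjI)
    show "\<forall>\<phi>::'a \<Rightarrow> real \<in> Lr r1 \<inter> Lr r2. integrable lborel (\<lambda>r. f (\<phi> r))" using int by blast
    show "\<exists>\<nu>1 \<nu>2. \<nu>1 \<ge> 0 \<and> \<nu>2 \<ge> 0 \<and>
          (\<forall>\<phi>::'a::euclidean_space \<Rightarrow> real \<in> Lr r1 \<inter> Lr r2. \<forall>\<psi>::'a \<Rightarrow> real \<in> Lr r1 \<inter> Lr r2.
             norm (levy_functional f \<phi> - levy_functional f \<psi>)
               \<le> \<nu>1 * H r1 \<phi> \<psi> + \<nu>2 * H r2 \<phi> \<psi>)"
      by (rule exI[of _ "2*K"], rule exI[of _ "2*K"]) (use main K in auto)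
    show "\<forall>\<phi>::'a::euclidean_space \<Rightarrow> real \<in> Lr r1 \<inter> Lr r2. \<forall>\<epsilon>>0. \<exists>\<delta>>0. \<forall>\<psi>::'a \<Rightarrow> real \<in> Lr r1 \<inter> Lr r2.
          Lr_dist r1 \<phi> \<psi> + Lr_dist r2 \<phi> \<psi> < \<delta> \<longrightarrow>
          norm (levy_functional f \<psi> - levy_functional f \<phi>) < \<epsilon>"
      using cont by blast
  qed
qed



definition kern :: "real \<Rightarrow> real \<Rightarrow> complex" where
  "kern \<omega> a = indicator (- {0}) a *\<^sub>R
          (exp (\<i> * complex_of_real (a * \<omega>)) - 1
           - \<i> * complex_of_real (\<omega> * a * indicator {a. \<bar>a\<bar> < 1} a))"

lemma levy_exponent_kern:
  "levy_exponent \<mu> \<sigma>2 V \<omega> = \<i> * complex_of_real (\<mu> * \<omega>) - complex_of_real (\<sigma>2 * \<omega>\<^sup>2 / 2) + (\<integral>a. kern \<omega> a \<partial>V)"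
  by (simp add: levy_exponent_def kern_def)

lemma compl0_borel[measurable]: "- {0::real} \<in> sets borel"
  by (intro borel_open) auto

lemma ball1_borel[measurable]: "{a::real. \<bar>a\<bar> < 1} \<in> sets borel"
  by measurable

lemma kern_meas[measurable]: "kern \<omega> \<in> borel_measurable borel"
  unfolding kern_def by measurable

lemma kern_bound: "norm (kern \<omega> a) \<le> (2 + \<omega>\<^sup>2) * min 1 (a\<^sup>2)"
proof (cases "a = 0")
  case True then show ?thesis by (simp add: kern_def)
next
  case a: False
  show ?thesis
  proof (cases "\<bar>a\<bar> < 1")
    case True
    have "norm (kern \<omega> a) = cmod (iexp (a*\<omega>) - 1 - \<i> * complex_of_real (a*\<omega>))"
      using a True by (simp add: kern_def mult.commute)
    also have "\<dots> \<le> (a*\<omega>)\<^sup>2 / 2" by (rule ie3)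
    also have "\<dots> \<le> (2 + \<omega>\<^sup>2) * a\<^sup>2" by (simp add: power_mult_distrib algebra_simps)
    also have "\<dots> = (2 + \<omega>\<^sup>2) * min 1 (a\<^sup>2)"
    proof -
      have "a\<^sup>2 < 1" using True by (simp add: abs_square_less_1)
      then show ?thesis by simp
    qed
    finally show ?thesis .
  next
    case False
    have "norm (kern \<omega> a) = cmod (iexp (a*\<omega>) - 1)"
      using a False by (simp add: kern_def)
    also have "\<dots> \<le> 2" by (rule ie2)
    also have "\<dots> \<le> (2 + \<omega>\<^sup>2) * min 1 (a\<^sup>2)"
    proof -
      have "1 \<le> \<bar>a\<bar>\<^sup>2" using False power_mono[of 1 "\<bar>a\<bar>" 2] by simp
      then have "1 \<le> a\<^sup>2" by simp
      then show ?thesis by simp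
    qed
    finally show ?thesis .
  qed
qed

lemma kern_int:
  assumes "levy_measure V"
  shows "integrable V (kern \<omega>)"
proof -
  have sV: "sets V = sets borel" using assms by (simp add: levy_measure_def)
  have m1: "(\<lambda>a::real. min 1 (a\<^sup>2)) \<in> borel_measurable V"
  proof -
    have "(\<lambda>a::real. min 1 (a\<^sup>2)) \<in> borel_measurable borel" by measurable
    then show ?thesis using measurable_cong_sets[OF sV refl] by blast
  qed
  have i1: "integrable V (\<lambda>a::real. (2 + \<omega>\<^sup>2) * min 1 (a\<^sup>2))"
  proof -
    have "integrable V (\<lambda>a::real. min 1 (a\<^sup>2))"
      using assms m1 by (intro integrableI_bounded) (auto simp: levy_measure_def)
    then show ?thesis by simp
  qed
  show ?thesis
  proof (rule Bochner_Integration.integrable_bound[OF i1])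
    show "kern \<omega> \<in> borel_measurable V" using measurable_cong_sets[OF sV refl] kern_meas by blast
    show "AE x in V. norm (kern \<omega> x) \<le> norm ((2 + \<omega>\<^sup>2) * min 1 (x\<^sup>2))"
      using kern_bound by (intro AE_I2) (smt (verit) real_norm_def)
  qed
qed

lemma kern_0: "kern 0 a = 0" by (simp add: kern_def)

lemma sym_integral:
  fixes g :: "real \<Rightarrow> complex"
  assumes sym: "symmetric_measure V" and sV: "sets V = sets borel"
    and g: "integrable V g"
  shows "integrable V (\<lambda>a. g (- a))" and "(\<integral>a. g (- a) \<partial>V) = (\<integral>a. g a \<partial>V)"
proof -
  have spV: "space V = UNIV" using sets_eq_imp_space_eq[OF sV] by simp
  have um: "uminus \<in> measurable V borel"
  proof -
    have "(uminus::real\<Rightarrow>real) \<in> borel_measurable borel" by measurable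
    then show ?thesis using measurable_cong_sets[OF sV refl] by blast
  qed
  have gm: "g \<in> borel_measurable borel"
    using borel_measurable_integrable[OF g] measurable_cong_sets[OF sV refl] by blast
  have d: "distr V borel uminus = V"
  proof (rule measure_eqI)
    show "sets (distr V borel uminus) = sets V" using sV by simp
    fix A assume "A \<in> sets (distr V borel uminus)"
    then have A: "A \<in> sets borel" by simp
    have e: "uminus -` A \<inter> space V = uminus ` A"
    proof (intro set_eqI iffI)
      fix x assume "x \<in> uminus -` A \<inter> space V"
      then have "- x \<in> A" by simp
      then show "x \<in> uminus ` A" by (rule rev_image_eqI) simp
    qed (auto simp: spV)
    have "emeasure (distr V borel uminus) A = emeasure V (uminus -` A \<inter> space V)"
      by (rule emeasure_distr[OF um A])
    also have "\<dots> = emeasure V A" using sym A by (simp add: e symmetric_measure_def)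
    finally show "emeasure (distr V borel uminus) A = emeasure V A" .
  qed
  have gi: "integrable (distr V borel uminus) g" using g d by simp
  show "integrable V (\<lambda>a. g (- a))"
    using integrable_distr_eq[OF um gm] gi by simp
  have "(\<integral>a. g a \<partial>distr V borel uminus) = (\<integral>a. g (- a) \<partial>V)"
    by (rule integral_distr[OF um gm])
  then show "(\<integral>a. g (- a) \<partial>V) = (\<integral>a. g a \<partial>V)" using d by simp
qed

lemma kern_sym_pt: "(kern \<omega> a + kern \<omega> (- a)) / 2 = indicator (- {0}) a * complex_of_real (cos (a * \<omega>) - 1)"
proof (cases "a = 0")
  case True then show ?thesis by (simp add: kern_def)
next
  case False
  have c0: "complex_of_real (cos (a*\<omega>)) = (exp (\<i> * complex_of_real (a*\<omega>)) + exp (-(\<i>*complex_of_real (a*\<omega>))))/2"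
    using cos_exp_eq[of "complex_of_real (a*\<omega>)"] by (simp only: cos_of_real)
  have "indicator (- {0}) a * complex_of_real (cos (a * \<omega>) - 1) = complex_of_real (cos (a*\<omega>)) - 1"
    using False by simp
  also have "\<dots> = (exp (\<i> * complex_of_real (a*\<omega>)) + exp (-(\<i>*complex_of_real (a*\<omega>))))/2 - 1"
    by (subst c0) (rule refl)
  also have "\<dots> = (kern \<omega> a + kern \<omega> (- a)) / 2"
  proof -
    have "indicat_real {a. \<bar>a\<bar> < 1} a = indicat_real {a. \<bar>a\<bar> < 1} (- a)"
      by (simp add: indicator_def)
    then show ?thesis using False by (simp add: kern_def field_simps)
  qed
  finally show ?thesis by simp
qed



lemma exps_facts:
  assumes "0 < p" "p \<le> q" "q \<le> 2"
  shows "0 < p_min p q \<mu> sg V" "p_max p q \<mu> sg V \<le> 2"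
    "p_min p q \<mu> sg V \<le> p_max p q \<mu> sg V"
    "\<mu> \<noteq> 0 \<Longrightarrow> p_min p q \<mu> sg V \<le> 1 \<and> 1 \<le> p_max p q \<mu> sg V"
    "\<not> symmetric_measure V \<Longrightarrow> p_min p q \<mu> sg V \<le> 1 \<and> 1 \<le> p_max p q \<mu> sg V"
    "sg \<noteq> 0 \<Longrightarrow> p_max p q \<mu> sg V = 2"
proof -
  define A where "A = exps_A p q \<mu> sg V"
  have fin: "finite A" by (simp add: A_def exps_A_def)
  have pA: "p \<in> A" by (simp add: A_def exps_A_def)
  then have ne: "A \<noteq> {}" by auto
  have rng: "\<And>x. x \<in> A \<Longrightarrow> 0 < x \<and> x \<le> 2"
    using assms by (auto simp: A_def exps_A_def split: if_splits)
  have mn: "p_min p q \<mu> sg V = Min A" by (simp add: p_min_def A_def)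
  have mx: "p_max p q \<mu> sg V = Max A" by (simp add: p_max_def A_def)
  have one: "1 \<in> A \<Longrightarrow> Min A \<le> 1 \<and> 1 \<le> Max A" using fin by auto
  show "0 < p_min p q \<mu> sg V" unfolding mn using Min_in[OF fin ne] rng by blast
  show "p_max p q \<mu> sg V \<le> 2" unfolding mx using Max_in[OF fin ne] rng by blast
  show "p_min p q \<mu> sg V \<le> p_max p q \<mu> sg V" unfolding mn mx using fin ne
    by (meson Min_le Max_ge pA order_trans)
  show "\<mu> \<noteq> 0 \<Longrightarrow> p_min p q \<mu> sg V \<le> 1 \<and> 1 \<le> p_max p q \<mu> sg V"
    unfolding mn mx using one by (simp add: A_def exps_A_def)
  show "\<not> symmetric_measure V \<Longrightarrow> p_min p q \<mu> sg V \<le> 1 \<and> 1 \<le> p_max p q \<mu> sg V"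
    unfolding mn mx using one by (simp add: A_def exps_A_def)
  show "sg \<noteq> 0 \<Longrightarrow> p_max p q \<mu> sg V = 2"
  proof -
    assume "sg \<noteq> 0"
    then have "2 \<in> A" by (simp add: A_def exps_A_def)
    then have "2 \<le> Max A" using fin by auto
    then show ?thesis unfolding mx using Max_in[OF fin ne] rng by force
  qed
qed

lemma kern_diff_large:
  assumes "1 \<le> \<bar>a\<bar>"
  shows "kern x a - kern y a = iexp (a*x) - iexp (a*y)"
  using assms by (simp add: kern_def)

lemma kern_diff_small:
  assumes "a \<noteq> 0" "\<bar>a\<bar> < 1"
  shows "kern x a - kern y a = iexp (a*x) - iexp (a*y) - \<i> * complex_of_real (a*(x-y))"
  using assms by (simp add: kern_def algebra_simps)



lemma jump_bound:
  assumes lm: "levy_measure V" and r1: "0 < r1" "r1 \<le> 2" and r2: "0 < r2" "r2 \<le> 2"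
    and ns: "\<not> symmetric_measure V \<Longrightarrow> r1 \<le> 1 \<and> 1 \<le> r2"
    and i1: "integrable V (\<lambda>a. indicator {a. 1 \<le> \<bar>a\<bar>} a * \<bar>a\<bar> powr r1)"
    and i2: "integrable V (\<lambda>a. indicator {a. 0 < \<bar>a\<bar> \<and> \<bar>a\<bar> < 1} a * \<bar>a\<bar> powr r2)"
  shows "norm ((\<integral>a. kern x a \<partial>V) - (\<integral>a. kern y a \<partial>V))
      \<le> 4 * ((\<integral>a. indicator {a. 1 \<le> \<bar>a\<bar>} a * \<bar>a\<bar> powr r1 \<partial>V) * Bf r1 x y
            + (\<integral>a. indicator {a. 0 < \<bar>a\<bar> \<and> \<bar>a\<bar> < 1} a * \<bar>a\<bar> powr r2 \<partial>V) * Bf r2 x y)"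
proof -
  define G1 where "G1 = (\<lambda>a::real. indicator {a. 1 \<le> \<bar>a\<bar>} a * \<bar>a\<bar> powr r1)"
  define G2 where "G2 = (\<lambda>a::real. indicator {a. 0 < \<bar>a\<bar> \<and> \<bar>a\<bar> < 1} a * \<bar>a\<bar> powr r2)"
  define G where "G = (\<lambda>a. 4 * (G1 a * Bf r1 x y + G2 a * Bf r2 x y))"
  have iG1: "integrable V G1" using i1 by (simp add: G1_def)
  have iG2: "integrable V G2" using i2 by (simp add: G2_def)
  have iG: "integrable V G" unfolding G_def using iG1 iG2 by simp
  have intG: "(\<integral>a. G a \<partial>V) = 4 * ((\<integral>a. G1 a \<partial>V) * Bf r1 x y + (\<integral>a. G2 a \<partial>V) * Bf r2 x y)"
    unfolding G_def using iG1 iG2 by simp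
  have sV: "sets V = sets borel" using lm by (simp add: levy_measure_def)
  have ki: "\<And>\<omega>. integrable V (kern \<omega>)" using kern_int[OF lm] .
  have "\<exists>D. integrable V D \<and> (\<integral>a. kern x a \<partial>V) - (\<integral>a. kern y a \<partial>V) = (\<integral>a. D a \<partial>V)
         \<and> (\<forall>a. norm (D a) \<le> G a)"
  proof (cases "symmetric_measure V")
    case True
    define kc where "kc = (\<lambda>\<omega> a. (kern \<omega> a + kern \<omega> (- a)) / 2)"
    have kci: "integrable V (kc \<omega>)" and kce: "(\<integral>a. kc \<omega> a \<partial>V) = (\<integral>a. kern \<omega> a \<partial>V)" for \<omega>
    proof -
      note s = sym_integral[OF True sV ki[of \<omega>]]
      show "integrable V (kc \<omega>)" unfolding kc_def using s(1) ki[of \<omega>] by simp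
      show "(\<integral>a. kc \<omega> a \<partial>V) = (\<integral>a. kern \<omega> a \<partial>V)" unfolding kc_def using s ki[of \<omega>]
        by (simp add: Bochner_Integration.integral_add)
    qed
    show ?thesis
    proof (intro exI[of _ "\<lambda>a. kc x a - kc y a"] conjI allI)
      show "integrable V (\<lambda>a. kc x a - kc y a)" using kci by simp
      show "(\<integral>a. kern x a \<partial>V) - (\<integral>a. kern y a \<partial>V) = (\<integral>a. kc x a - kc y a \<partial>V)"
        using kci kce by (simp add: Bochner_Integration.integral_diff)
      fix a :: real
      have e: "kc x a - kc y a = indicator (- {0}) a * complex_of_real (cos (a*x) - cos (a*y))"
        unfolding kc_def kern_sym_pt by (simp add: algebra_simps)
      show "norm (kc x a - kc y a) \<le> G a"
      proof (cases "a = 0")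
        case True then show ?thesis using e by (simp add: G_def G1_def G2_def Bf_nonneg)
      next
        case a0: False
        show ?thesis
        proof (cases "1 \<le> \<bar>a\<bar>")
          case True
          have "norm (kc x a - kc y a) = \<bar>cos (a*x) - cos (a*y)\<bar>" using e a0 by (simp del: of_real_diff add: of_real_diff[symmetric])
          also have "\<dots> \<le> 2 * \<bar>a\<bar> powr r1 * Bf r1 x y" using K1 r1 by simp
          also have "\<dots> \<le> G a" using True Bf_nonneg[of r1 x y]
            by (simp add: G_def G1_def G2_def)
          finally show ?thesis .
        next
          case False
          have "norm (kc x a - kc y a) = \<bar>cos (a*x) - cos (a*y)\<bar>" using e a0 by (simp del: of_real_diff add: of_real_diff[symmetric])
          also have "\<dots> \<le> 2 * \<bar>a\<bar> powr r2 * Bf r2 x y" using K1 r2 by simp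
          also have "\<dots> \<le> G a" using False a0 Bf_nonneg[of r2 x y]
            by (simp add: G_def G1_def G2_def)
          finally show ?thesis .
        qed
      qed
    qed
  next
    case False
    with ns have rr: "r1 \<le> 1" "1 \<le> r2" by auto
    show ?thesis
    proof (intro exI[of _ "\<lambda>a. kern x a - kern y a"] conjI allI)
      show "integrable V (\<lambda>a. kern x a - kern y a)" using ki by simp
      show "(\<integral>a. kern x a \<partial>V) - (\<integral>a. kern y a \<partial>V) = (\<integral>a. kern x a - kern y a \<partial>V)"
        using ki by (simp add: Bochner_Integration.integral_diff)
      fix a :: real
      show "norm (kern x a - kern y a) \<le> G a"
      proof (cases "a = 0")
        case True then show ?thesis by (simp add: kern_def G_def G1_def G2_def Bf_nonneg)
      next
        case a0: False
        show ?thesis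
        proof (cases "1 \<le> \<bar>a\<bar>")
          case True
          have "norm (kern x a - kern y a) = cmod (iexp (a*x) - iexp (a*y))"
            using kern_diff_large[OF True] by simp
          also have "\<dots> \<le> 2 * \<bar>a\<bar> powr r1 * Bf r1 x y" using K2 r1 rr by simp
          also have "\<dots> \<le> G a" using True Bf_nonneg[of r1 x y]
            by (simp add: G_def G1_def G2_def)
          finally show ?thesis .
        next
          case False
          have "norm (kern x a - kern y a) = cmod (iexp (a*x) - iexp (a*y) - \<i> * complex_of_real (a*(x-y)))"
            using kern_diff_small[OF a0] False by simp
          also have "\<dots> \<le> 4 * \<bar>a\<bar> powr r2 * Bf r2 x y" using K3 r2 rr by simp
          also have "\<dots> \<le> G a" using False a0 Bf_nonneg[of r2 x y]
            by (simp add: G_def G1_def G2_def)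
          finally show ?thesis .
        qed
      qed
    qed
  qed
  then obtain D where Di: "integrable V D"
    and De: "(\<integral>a. kern x a \<partial>V) - (\<integral>a. kern y a \<partial>V) = (\<integral>a. D a \<partial>V)"
    and Dl: "\<And>a. norm (D a) \<le> G a" by blast
  have "norm ((\<integral>a. kern x a \<partial>V) - (\<integral>a. kern y a \<partial>V)) \<le> (\<integral>a. norm (D a) \<partial>V)"
    unfolding De by (rule integral_norm_bound)
  also have "\<dots> \<le> (\<integral>a. G a \<partial>V)"
    by (rule integral_mono[OF _ iG Dl]) (use Di in simp)
  finally show ?thesis unfolding intG by (simp add: G1_def G2_def)
qed



lemma levy_class_int:
  assumes "V \<in> levy_class r1 r2"
  shows "integrable V (\<lambda>a. indicator {a. 1 \<le> \<bar>a\<bar>} a * \<bar>a\<bar> powr r1)"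
    and "integrable V (\<lambda>a. indicator {a. 0 < \<bar>a\<bar> \<and> \<bar>a\<bar> < 1} a * \<bar>a\<bar> powr r2)"
proof -
  have sV: "sets V = sets borel" using assms by (simp add: levy_class_def)
  have m1: "(\<lambda>a::real. indicator {a. 1 \<le> \<bar>a\<bar>} a * \<bar>a\<bar> powr r1) \<in> borel_measurable V"
  proof -
    have "(\<lambda>a::real. indicator {a. 1 \<le> \<bar>a\<bar>} a * \<bar>a\<bar> powr r1) \<in> borel_measurable borel" by measurable
    then show ?thesis using measurable_cong_sets[OF sV refl] by blast
  qed
  have m2: "(\<lambda>a::real. indicator {a. 0 < \<bar>a\<bar> \<and> \<bar>a\<bar> < 1} a * \<bar>a\<bar> powr r2) \<in> borel_measurable V"
  proof -
    have "(\<lambda>a::real. indicator {a. 0 < \<bar>a\<bar> \<and> \<bar>a\<bar> < 1} a * \<bar>a\<bar> powr r2) \<in> borel_measurable borel" by measurable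
    then show ?thesis using measurable_cong_sets[OF sV refl] by blast
  qed
  show "integrable V (\<lambda>a. indicator {a. 1 \<le> \<bar>a\<bar>} a * \<bar>a\<bar> powr r1)"
    using m1 assms by (intro integrableI_bounded) (simp_all add: levy_class_def abs_mult)
  show "integrable V (\<lambda>a. indicator {a. 0 < \<bar>a\<bar> \<and> \<bar>a\<bar> < 1} a * \<bar>a\<bar> powr r2)"
    using m2 assms by (intro integrableI_bounded) (simp_all add: levy_class_def abs_mult)
qed

lemma pointwise:
  assumes s: "\<sigma>2 \<ge> 0" and lm: "levy_measure V"
    and p: "0 < p" "p \<le> q" "q \<le> 2"
    and lc: "V \<in> levy_class (p_min p q \<mu> \<sigma>2 V) (p_max p q \<mu> \<sigma>2 V)"
  shows "\<exists>K\<ge>0. \<forall>x y. norm (levy_exponent \<mu> \<sigma>2 V x - levy_exponent \<mu> \<sigma>2 V y)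
            \<le> K * (Bf (p_min p q \<mu> \<sigma>2 V) x y + Bf (p_max p q \<mu> \<sigma>2 V) x y)"
proof -
  define r1 where "r1 = p_min p q \<mu> \<sigma>2 V"
  define r2 where "r2 = p_max p q \<mu> \<sigma>2 V"
  note ef = exps_facts[OF p, where \<mu>=\<mu> and sg=\<sigma>2 and V=V, folded r1_def r2_def]
  have r1: "0 < r1" "r1 \<le> 2" and r2: "0 < r2" "r2 \<le> 2" using ef by auto
  note ii = levy_class_int[OF lc, folded r1_def r2_def]
  define M1 where "M1 = (\<integral>a. indicator {a. 1 \<le> \<bar>a\<bar>} a * \<bar>a\<bar> powr r1 \<partial>V)"
  define M2 where "M2 = (\<integral>a. indicator {a. 0 < \<bar>a\<bar> \<and> \<bar>a\<bar> < 1} a * \<bar>a\<bar> powr r2 \<partial>V)"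
  have M1: "0 \<le> M1" unfolding M1_def by (intro integral_nonneg_AE) auto
  have M2: "0 \<le> M2" unfolding M2_def by (intro integral_nonneg_AE) auto
  define K where "K = \<bar>\<mu>\<bar> + \<sigma>2 + 4 * (M1 + M2)"
  have K: "0 \<le> K" using M1 M2 s by (simp add: K_def)
  show ?thesis unfolding r1_def[symmetric] r2_def[symmetric]
  proof (intro exI[of _ K] conjI K allI)
    fix x y :: real
    have jb: "norm ((\<integral>a. kern x a \<partial>V) - (\<integral>a. kern y a \<partial>V)) \<le> 4 * (M1 * Bf r1 x y + M2 * Bf r2 x y)"
      unfolding M1_def M2_def by (rule jump_bound[OF lm r1 r2 _ ii]) (use ef in auto)
    have drift: "\<bar>\<mu>\<bar> * \<bar>x - y\<bar> \<le> \<bar>\<mu>\<bar> * (Bf r1 x y + Bf r2 x y)"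
    proof (cases "\<mu> = 0")
      case False
      then have "r1 \<le> 1" "1 \<le> r2" using ef by auto
      then have "\<bar>x - y\<bar> \<le> Bf r1 x y + Bf r2 x y" using drift_le[of x y] Bf_between[of r1 1 r2 x y] by linarith
      then show ?thesis by (intro mult_left_mono) auto
    qed simp
    have diff: "\<sigma>2 * \<bar>x\<^sup>2 - y\<^sup>2\<bar> / 2 \<le> \<sigma>2 * (Bf r1 x y + Bf r2 x y)"
    proof (cases "\<sigma>2 = 0")
      case False
      then have "r2 = 2" using ef by auto
      then have "\<bar>x\<^sup>2 - y\<^sup>2\<bar> / 2 \<le> Bf r1 x y + Bf r2 x y" using sq_le[of x y] Bf_nonneg[of r1 x y] by simp
      then show ?thesis using s by (metis mult_left_mono times_divide_eq_right)
    qed simp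
    have e: "levy_exponent \<mu> \<sigma>2 V x - levy_exponent \<mu> \<sigma>2 V y
        = \<i> * complex_of_real (\<mu> * (x - y)) - complex_of_real (\<sigma>2 * (x\<^sup>2 - y\<^sup>2) / 2)
          + ((\<integral>a. kern x a \<partial>V) - (\<integral>a. kern y a \<partial>V))"
      unfolding levy_exponent_kern by (simp add: field_simps)
    have "norm (levy_exponent \<mu> \<sigma>2 V x - levy_exponent \<mu> \<sigma>2 V y)
        \<le> norm (\<i> * complex_of_real (\<mu> * (x - y))) + norm (complex_of_real (\<sigma>2 * (x\<^sup>2 - y\<^sup>2) / 2))
          + norm ((\<integral>a. kern x a \<partial>V) - (\<integral>a. kern y a \<partial>V))"
      unfolding e by (rule order_trans[OF norm_triangle_ineq add_right_mono[OF norm_triangle_ineq4]])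
    also have "\<dots> = \<bar>\<mu>\<bar> * \<bar>x - y\<bar> + \<sigma>2 * \<bar>x\<^sup>2 - y\<^sup>2\<bar> / 2 + norm ((\<integral>a. kern x a \<partial>V) - (\<integral>a. kern y a \<partial>V))"
    proof -
      have 1: "norm (\<i> * complex_of_real (\<mu> * (x - y))) = \<bar>\<mu>\<bar> * \<bar>x - y\<bar>"
        by (simp only: norm_mult norm_of_real) (simp add: abs_mult)
      have 2: "norm (complex_of_real (\<sigma>2 * (x\<^sup>2 - y\<^sup>2) / 2)) = \<sigma>2 * \<bar>x\<^sup>2 - y\<^sup>2\<bar> / 2"
        using s by (simp only: norm_of_real) (simp add: abs_mult)
      show ?thesis unfolding 1 2 ..
    qed
    also have "\<dots> \<le> \<bar>\<mu>\<bar> * (Bf r1 x y + Bf r2 x y) + \<sigma>2 * (Bf r1 x y + Bf r2 x y) + 4 * (M1 * Bf r1 x y + M2 * Bf r2 x y)"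
      by (intro add_mono drift diff jb)
    also have "\<dots> \<le> K * (Bf r1 x y + Bf r2 x y)"
      using M1 M2 Bf_nonneg[of r1 x y] Bf_nonneg[of r2 x y]
      by (simp add: K_def algebra_simps mult_nonneg_nonneg)
    finally show "norm (levy_exponent \<mu> \<sigma>2 V x - levy_exponent \<mu> \<sigma>2 V y) \<le> K * (Bf r1 x y + Bf r2 x y)" .
  qed
qed

theorem proposition3p15:
  fixes \<mu> \<sigma>2 p q :: real and V :: "real measure"
  assumes "\<sigma>2 \<ge> 0" and "levy_measure V"
    and "0 < p" and "p \<le> q" and "q \<le> 2"
    and "V \<in> levy_class (p_min p q \<mu> \<sigma>2 V) (p_max p q \<mu> \<sigma>2 V)"
  defines "f \<equiv> levy_exponent \<mu> \<sigma>2 V"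
    and "pmin \<equiv> p_min p q \<mu> \<sigma>2 V" and "pmax \<equiv> p_max p q \<mu> \<sigma>2 V"
  shows "(\<forall>\<phi>::'a::euclidean_space \<Rightarrow> real \<in> Lr pmin \<inter> Lr pmax. integrable lborel (\<lambda>r. f (\<phi> r)))
     \<and> (\<exists>\<nu>1 \<nu>2. \<nu>1 \<ge> 0 \<and> \<nu>2 \<ge> 0 \<and>
          (\<forall>\<phi>::'a::euclidean_space \<Rightarrow> real \<in> Lr pmin \<inter> Lr pmax. \<forall>\<psi>::'a \<Rightarrow> real \<in> Lr pmin \<inter> Lr pmax.
             norm (levy_functional f \<phi> - levy_functional f \<psi>)
               \<le> \<nu>1 * H pmin \<phi> \<psi> + \<nu>2 * H pmax \<phi> \<psi>))
     \<and> (\<forall>\<phi>::'a::euclidean_space \<Rightarrow> real \<in> Lr pmin \<inter> Lr pmax. \<forall>\<epsilon>>0. \<exists>\<delta>>0. \<forall>\<psi>::'a \<Rightarrow> real \<in> Lr pmin \<inter> Lr pmax.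
          Lr_dist pmin \<phi> \<psi> + Lr_dist pmax \<phi> \<psi> < \<delta> \<longrightarrow>
          norm (levy_functional f \<psi> - levy_functional f \<phi>) < \<epsilon>)"
proof -
  note ef = exps_facts[OF assms(3-5), where \<mu>=\<mu> and sg=\<sigma>2 and V=V, folded pmin_def pmax_def]
  obtain K where K: "0 \<le> K"
    and b: "\<And>x y. norm (f x - f y) \<le> K * (Bf pmin x y + Bf pmax x y)"
    using pointwise[OF assms(1-6)] unfolding f_def pmin_def pmax_def by blast
  have k0: "kern 0 = (\<lambda>a. 0)" by (rule ext) (simp add: kern_0)
  have f0: "f 0 = 0" unfolding f_def levy_exponent_kern k0 by simp
  show ?thesis
    by (rule functional_part[OF K _ _ _ _ f0 b]) (use ef in auto)
qed

end
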